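(* Consider the scheduling model described in the context with parameters $(p_k,q_k,d,K)$. Suppose a fixed source $k$ is scheduled in every time slot, starting from $t=-\infty$. Then the expected reward received by the monitoring station in any time slot equals $\mu_k := \frac{p_kq_k}{1-d(1-p_k)}$. Consequently the optimal source, i.e. the source whose permanent scheduling (from $t=-\infty$) maximizes the expected reward received by the monitoring station, and which the oracle policy schedules in every time slot, is $$k^* = \arg\max_{1\le k\le K}\frac{p_kq_k}{1-d(1-p_k)}.$$
   Context: Model: there are $K$ sources, one communication channel and one monitoring station; time is slotted. In each slot exactly one source is scheduled to transmit its update. If source $k$ is scheduled, the transmission succeeds with probability $p_k$ (independently across slots and of everything else), and the update is a correct measurement ($Q=1$) with probability $q_k$, otherwise $Q=0$ (independently across slots and of everything else). The age of information $a(t)$ at slot $t$ satisfies $a(t)=1$ if the transmission in slot $t-1$ succeeded and $a(t)=a(t-1)+1$ otherwise. With a known depreciation factor $d\in(0,1)$, the reward in slot $t$ is $r(t)=Q(t-a(t))\,d^{a(t)-1}$, where $Q(s)\in\{0,1\}$ is the correctness indicator of the update successfully delivered in slot $s$; equivalently $r(t)=Q(t-1)$ if the transmission in slot $t-1$ succeeds and $r(t)=d\,r(t-1)$ otherwise. *)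

theory Defs
  imports "HOL-Probability.Probability"
begin

text \<open>S t w: the transmission in slot t succeeds;
  Q t w: the update sent in slot t is a correct measurement.
  Age at slot t: a(t) = least j \<ge> 1 such that the transmission in slot t - j succeeded
  (this is the unique solution of a(t) = 1 if success at t-1, a(t) = a(t-1)+1 otherwise,
  for a process started at t = -infinity).\<close>

definition age :: "(int \<Rightarrow> 'a \<Rightarrow> bool) \<Rightarrow> int \<Rightarrow> 'a \<Rightarrow> nat" where
  "age S t w = (LEAST j. j \<ge> 1 \<and> S (t - int j) w)"

text \<open>Reward r(t) = Q(t - a(t)) d^(a(t)-1); on the (probability zero) event that no
  transmission ever succeeded we set the reward to 0.\<close>

definition reward ::
  "(int \<Rightarrow> 'a \<Rightarrow> bool) \<Rightarrow> (int \<Rightarrow> 'a \<Rightarrow> bool) \<Rightarrow> real \<Rightarrow> int \<Rightarrow> 'a \<Rightarrow> real" where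
  "reward S Q d t w =
     (if \<exists>j\<ge>1. S (t - int j) w
      then (if Q (t - int (age S t w)) w then d ^ (age S t w - 1) else 0)
      else 0)"

definition mu :: "real \<Rightarrow> real \<Rightarrow> real \<Rightarrow> real" where
  "mu p q d = p * q / (1 - d * (1 - p))"

end

theory Submission
  imports Defs
begin

context prob_space begin

lemma prob_E:
  fixes S Q :: "int \<Rightarrow> 'a \<Rightarrow> bool"
  assumes ind: "indep_vars (\<lambda>_. count_space UNIV)
             (\<lambda>(t, b). if b then S t else Q t) (UNIV :: (int \<times> bool) set)"
    and pS: "\<And>t. measure M {w \<in> space M. S t w} = p"
    and pQ: "\<And>t. measure M {w \<in> space M. Q t w} = q"
    and j: "j \<ge> 1"
  shows "prob {w\<in>space M. S (t - int j) w \<and> (\<forall>i\<in>{1..<j}. \<not> S (t - int i) w) \<and> Q (t - int j) w}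
     = p * (1 - p) ^ (j - 1) * q"
proof -
  define P where "P = (\<lambda>(s::int, b::bool) (x::bool). if b then (if s = t - int j then x else \<not> x) else x)"
  define X where "X = (\<lambda>(t::int, b::bool). if b then S t else Q t)"
  define A where "A = (\<lambda>i. {w\<in>space M. P i (X i w)})"
  have ie: "indep_events A UNIV"
  proof -
    have "indep_vars (\<lambda>_. count_space UNIV) X UNIV" using ind unfolding X_def .
    from indep_eventsI_indep_vars[of "\<lambda>_. count_space UNIV" X UNIV P, OF this]
    show ?thesis unfolding A_def by simp
  qed
  define J where "J = (\<lambda>i. (t - int i, True)) ` {1..j} \<union> {(t - int j, False)}"
  have fin: "finite J" "J \<noteq> {}" unfolding J_def by auto
  have "prob (\<Inter>i\<in>J. A i) = (\<Prod>i\<in>J. prob (A i))"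
    using ie fin unfolding indep_events_def by auto
  moreover have "(\<Inter>i\<in>J. A i) = {w\<in>space M. S (t - int j) w \<and> (\<forall>i\<in>{1..<j}. \<not> S (t - int i) w) \<and> Q (t - int j) w}"
    (is "?L = ?R")
  proof (intro equalityI subsetI)
    fix w assume w: "w \<in> ?L"
    have Aw: "w \<in> A i" if "i \<in> J" for i using w that by blast
    have 1: "w \<in> space M \<and> S (t - int j) w"
      using Aw[of "(t - int j, True)"] j unfolding J_def A_def P_def X_def by simp
    have 2: "Q (t - int j) w"
      using Aw[of "(t - int j, False)"] unfolding J_def A_def P_def X_def by simp
    have 3: "\<not> S (t - int i) w" if i: "i \<in> {1..<j}" for i
      using Aw[of "(t - int i, True)"] i unfolding J_def A_def P_def X_def by simp
    show "w \<in> ?R" using 1 2 3 by blast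
  next
    fix w assume w: "w \<in> ?R"
    show "w \<in> ?L"
    proof
      fix x assume "x \<in> J"
      then consider i where "i \<in> {1..j}" "x = (t - int i, True)" | "x = (t - int j, False)"
        unfolding J_def by blast
      then show "w \<in> A x"
      proof cases
        case (1 i)
        then show ?thesis using w unfolding A_def P_def X_def by (cases "i = j") auto
      next
        case 2
        then show ?thesis using w unfolding A_def P_def X_def by simp
      qed
    qed
  qed
  moreover have "(\<Prod>i\<in>J. prob (A i)) = p * (1 - p) ^ (j - 1) * q"
  proof -
    have evS: "{w\<in>space M. S s w} \<in> events" for s
    proof -
      have "\<forall>i\<in>UNIV. random_variable (count_space UNIV) ((\<lambda>(t, b). if b then S t else Q t) i)"
        using ind unfolding indep_vars_def2 by (rule conjunct1)
      then have "random_variable (count_space UNIV) ((\<lambda>(t, b). if b then S t else Q t) (s, True))"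
        by (rule bspec) simp
      then have "random_variable (count_space UNIV) (S s)" by simp
      from measurable_sets[OF this, of "{True}"]
      show ?thesis by (simp add: vimage_def Int_def conj_commute)
    qed
    have notS: "prob {w\<in>space M. \<not> S s w} = 1 - p" for s
    proof -
      have "{w\<in>space M. \<not> S s w} = space M - {w\<in>space M. S s w}" by auto
      then show ?thesis using prob_compl[OF evS[of s]] pS by simp
    qed
    have "J = insert (t - int j, False) (insert (t - int j, True) ((\<lambda>i. (t - int i, True)) ` {1..<j}))"
      using j unfolding J_def by (auto simp: atLeastLessThanSuc_atLeastAtMost[symmetric]) 
    then have "(\<Prod>i\<in>J. prob (A i)) = prob (A (t - int j, False)) * (prob (A (t - int j, True)) *
        (\<Prod>i\<in>{1..<j}. prob (A (t - int i, True))))"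
      by (simp add: prod.insert image_iff prod.reindex inj_on_def)
    also have "\<dots> = q * (p * (\<Prod>i\<in>{1..<j}. (1 - p)))"
      unfolding A_def P_def X_def using pS pQ notS by (intro arg_cong2[where f="(*)"] prod.cong) auto
    finally show ?thesis using j by simp
  qed
  ultimately show ?thesis by simp
qed

lemma reward_pointwise:
  fixes S Q :: "int \<Rightarrow> 'b \<Rightarrow> bool" and t :: int
  defines "E \<equiv> \<lambda>j. {w. S (t - int j) w \<and> (\<forall>i\<in>{1..<j}. \<not> S (t - int i) w) \<and> Q (t - int j) w}"
  shows "reward S Q d t w = (\<Sum>n. d ^ n * indicator (E (Suc n)) w)"
proof (cases "\<exists>j\<ge>1. S (t - int j) w")
  case True
  define a where "a = age S t w"
  have a1: "a \<ge> 1 \<and> S (t - int a) w"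
    unfolding a_def age_def using True by (metis (mono_tags, lifting) LeastI)
  have a2: "\<not> S (t - int i) w" if "1 \<le> i" "i < a" for i
    using not_less_Least[of i "\<lambda>j. j \<ge> 1 \<and> S (t - int j) w"] that unfolding a_def age_def by blast
  have "w \<in> E (Suc n) \<longleftrightarrow> Suc n = a \<and> Q (t - int a) w" for n
  proof
    assume "w \<in> E (Suc n)"
    then have h: "S (t - int (Suc n)) w" "\<forall>i\<in>{1..<Suc n}. \<not> S (t - int i) w" "Q (t - int (Suc n)) w"
      unfolding E_def by auto
    have "Suc n = a"
    proof (rule ccontr)
      assume "Suc n \<noteq> a"
      then consider "Suc n < a" | "a < Suc n" by linarith
      then show False
      proof cases
        case 1 then show ?thesis using h(1) a2[of "Suc n"] by simp
      next
        case 2 then show ?thesis using h(2) a1 by auto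
      qed
    qed
    then show "Suc n = a \<and> Q (t - int a) w" using h by simp
  next
    assume "Suc n = a \<and> Q (t - int a) w"
    then show "w \<in> E (Suc n)" unfolding E_def using a1 a2 by auto
  qed
  then have "(\<lambda>n. d ^ n * indicator (E (Suc n)) w) =
      (\<lambda>n. if n = a - 1 then (if Q (t - int a) w then d ^ (a - 1) else 0) else 0)"
    using a1 by (auto simp: fun_eq_iff indicator_def)
  moreover have "reward S Q d t w = (if Q (t - int a) w then d ^ (a - 1) else 0)"
    unfolding reward_def a_def using True by simp
  ultimately show ?thesis
    using sums_unique[OF sums_single[of "a - 1" "\<lambda>_. (if Q (t - int a) w then d ^ (a - 1) else 0::real)"]]
    by simp
next
  case False
  then have "w \<notin> E (Suc n)" for n unfolding E_def by auto
  then have "(\<lambda>n. d ^ n * indicator (E (Suc n)) w) = (\<lambda>n. 0::real)" by (simp add: fun_eq_iff)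
  moreover have "reward S Q d t w = 0" using False unfolding reward_def by meson
  ultimately show ?thesis by simp
qed

lemma indep_rv:
  fixes S Q :: "int \<Rightarrow> 'a \<Rightarrow> bool"
  assumes ind: "indep_vars (\<lambda>_. count_space UNIV)
             (\<lambda>(t, b). if b then S t else Q t) (UNIV :: (int \<times> bool) set)"
  shows "Measurable.pred M (S s)" "Measurable.pred M (Q s)"
proof -
  have *: "\<forall>i\<in>UNIV. random_variable (count_space UNIV) ((\<lambda>(t, b). if b then S t else Q t) i)"
    using ind unfolding indep_vars_def2 by (rule conjunct1)
  have "random_variable (count_space UNIV) ((\<lambda>(t, b). if b then S t else Q t) (s, True))"
    using * by (rule bspec) simp
  then show "Measurable.pred M (S s)" by (simp add: pred_def)
  have "random_variable (count_space UNIV) ((\<lambda>(t, b). if b then S t else Q t) (s, False))"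
    using * by (rule bspec) simp
  then show "Measurable.pred M (Q s)" by (simp add: pred_def)
qed

lemma reward_integral:
  fixes S Q :: "int \<Rightarrow> 'a \<Rightarrow> bool"
  assumes ind: "indep_vars (\<lambda>_. count_space UNIV)
             (\<lambda>(t, b). if b then S t else Q t) (UNIV :: (int \<times> bool) set)"
    and pS: "\<And>t. measure M {w \<in> space M. S t w} = p"
    and pQ: "\<And>t. measure M {w \<in> space M. Q t w} = q"
    and p: "0 \<le> p" "p \<le> 1" and d: "0 < d" "d < 1"
  shows "integral\<^sup>L M (reward S Q d t) = mu p q d"
proof -
  have mS[measurable]: "Measurable.pred M (S s)" for s
    by (rule indep_rv(1)[OF ind])
  have mQ[measurable]: "Measurable.pred M (Q s)" for s
    by (rule indep_rv(2)[OF ind])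
  define E where "E \<equiv> \<lambda>j. {w. S (t - int j) w \<and> (\<forall>i\<in>{1..<j}. \<not> S (t - int i) w) \<and> Q (t - int j) w}"
  define f where "f = (\<lambda>n w. d ^ n * indicator (E (Suc n) \<inter> space M) w :: real)"
  have Eev: "E j \<inter> space M \<in> events" for j
  proof -
    have "E j \<inter> space M = {w\<in>space M. S (t - int j) w \<and> (\<forall>i\<in>{1..<j}. \<not> S (t - int i) w) \<and> Q (t - int j) w}"
      unfolding E_def by auto
    also have "\<dots> \<in> events" by measurable
    finally show ?thesis .
  qed
  have probE: "prob (E (Suc n) \<inter> space M) = p * (1 - p) ^ n * q" for n
  proof -
    have "E (Suc n) \<inter> space M = {w\<in>space M. S (t - int (Suc n)) w \<and> (\<forall>i\<in>{1..<Suc n}. \<not> S (t - int i) w) \<and> Q (t - int (Suc n)) w}"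
      unfolding E_def by auto
    then show ?thesis using prob_E[OF ind pS pQ, of "Suc n" t] by simp
  qed
  have intf: "integrable M (f n)" for n
    unfolding f_def using Eev[of "Suc n"] by (intro integrable_mult_right integrable_real_indicator) (auto simp: less_top[symmetric])
  have pw: "reward S Q d t w = (\<Sum>n. f n w)" if "w \<in> space M" for w
    using reward_pointwise[where S=S and Q=Q and t=t and d=d and w=w] that unfolding f_def E_def by (simp add: indicator_def)
  have intf2: "integral\<^sup>L M (f n) = p * q * (d * (1 - p)) ^ n" for n
    unfolding f_def using Eev[of "Suc n"] probE[of n] by (simp add: power_mult_distrib)
  have nf: "norm (f n w) \<le> d ^ n" for n w
    unfolding f_def using d by (auto simp: indicator_def)
  have g0: "0 \<le> d * (1 - p)" using p d by simp
  have g1: "d * (1 - p) \<le> d * 1" using p d by (intro mult_left_mono) auto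
  have g2: "d * (1 - p) < 1" using g1 d by linarith
  have g: "norm (d * (1 - p)) < 1" using g0 g2 by (simp only: real_norm_def abs_of_nonneg)
  have "integral\<^sup>L M (reward S Q d t) = integral\<^sup>L M (\<lambda>w. \<Sum>n. f n w)"
    by (rule Bochner_Integration.integral_cong[OF refl pw])
  also have "\<dots> = (\<Sum>n. integral\<^sup>L M (f n))"
  proof (rule integral_suminf)
    show "integrable M (f i)" for i by (rule intf)
    show "AE x in M. summable (\<lambda>i. norm (f i x))"
      using nf d by (intro AE_I2 summable_comparison_test[OF _ summable_geometric[of d]]) auto
    have nn: "(\<lambda>x. norm (f i x)) = f i" for i
      unfolding f_def using d by (auto simp: fun_eq_iff indicator_def)
    have "integral\<^sup>L M (\<lambda>x. norm (f i x)) = integral\<^sup>L M (f i)" for i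
      by (simp only: nn)
    then show "summable (\<lambda>i. integral\<^sup>L M (\<lambda>x. norm (f i x)))"
      using summable_geometric[OF g] by (simp add: intf2 summable_mult)
  qed
  also have "\<dots> = p * q * (\<Sum>n. (d * (1 - p)) ^ n)"
    using summable_geometric[OF g] by (simp add: intf2 suminf_mult)
  also have "\<dots> = mu p q d"
    using suminf_geometric[OF g] unfolding mu_def by simp
  finally show ?thesis .
qed

end

theorem theorem1:
  fixes M :: "'a measure" and K :: nat and p q :: "nat \<Rightarrow> real" and d :: real
    and S Q :: "nat \<Rightarrow> int \<Rightarrow> 'a \<Rightarrow> bool"
  assumes "prob_space M"
    and "K \<ge> 1"
    and "0 < d" and "d < 1"
    and "\<And>k. k \<in> {1..K} \<Longrightarrow> 0 \<le> p k \<and> p k \<le> 1"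
    and "\<And>k. k \<in> {1..K} \<Longrightarrow> 0 \<le> q k \<and> q k \<le> 1"
    and "\<And>k. k \<in> {1..K} \<Longrightarrow>
           prob_space.indep_vars M (\<lambda>_. count_space UNIV)
             (\<lambda>(t, b). if b then S k t else Q k t) (UNIV :: (int \<times> bool) set)"
    and "\<And>k t. k \<in> {1..K} \<Longrightarrow> measure M {w \<in> space M. S k t w} = p k"
    and "\<And>k t. k \<in> {1..K} \<Longrightarrow> measure M {w \<in> space M. Q k t w} = q k"
  shows "(\<forall>k\<in>{1..K}. \<forall>t. integral\<^sup>L M (reward (S k) (Q k) d t) = mu (p k) (q k) d)
       \<and> (\<forall>ks\<in>{1..K}.
            (\<forall>k\<in>{1..K}. \<forall>t. integral\<^sup>L M (reward (S k) (Q k) d t)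
                               \<le> integral\<^sup>L M (reward (S ks) (Q ks) d t))
            \<longleftrightarrow> (\<forall>k\<in>{1..K}. mu (p k) (q k) d \<le> mu (p ks) (q ks) d))"
proof -
  interpret prob_space M by (rule assms(1))
  have E: "\<forall>k\<in>{1..K}. \<forall>t. integral\<^sup>L M (reward (S k) (Q k) d t) = mu (p k) (q k) d"
  proof (intro ballI allI)
    fix k t assume k: "k \<in> {1..K}"
    show "integral\<^sup>L M (reward (S k) (Q k) d t) = mu (p k) (q k) d"
    proof (rule reward_integral[of "S k" "Q k" "p k" "q k" d t])
      show "indep_vars (\<lambda>_. count_space UNIV) (\<lambda>(t, b). if b then S k t else Q k t) (UNIV :: (int \<times> bool) set)"
        using assms(7)[OF k] .
      show "measure M {w \<in> space M. S k t w} = p k" for t using assms(8)[OF k] .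
      show "measure M {w \<in> space M. Q k t w} = q k" for t using assms(9)[OF k] .
    qed (use assms(5)[OF k] assms(3,4) in auto)
  qed
  moreover have "(\<forall>k\<in>{1..K}. \<forall>t. integral\<^sup>L M (reward (S k) (Q k) d t)
                               \<le> integral\<^sup>L M (reward (S ks) (Q ks) d t))
            \<longleftrightarrow> (\<forall>k\<in>{1..K}. mu (p k) (q k) d \<le> mu (p ks) (q ks) d)" if ks: "ks \<in> {1..K}" for ks
  proof -
    have "integral\<^sup>L M (reward (S k) (Q k) d t) \<le> integral\<^sup>L M (reward (S ks) (Q ks) d t)
       \<longleftrightarrow> mu (p k) (q k) d \<le> mu (p ks) (q ks) d" if "k \<in> {1..K}" for k t
      using E ks that by simp
    then show ?thesis by blast
  qed
  ultimately show ?thesis by blast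
qed

end
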